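(* Let $F$ (of size $N$) and $G$ (of size $M$) be Fourier matrices. (a) If $\gcd(M,N)=1$, then the number of entries of $F\otimes G$ equal to $1$ is the product of the number of entries of $F$ equal to $1$ and the number of entries of $G$ equal to $1$ (equivalently, the multiplicity of $1$ in the spectrum of $\mathcal I_{(MN)^{-1/2}F\otimes G}$ is the product of those for $\mathcal I_{N^{-1/2}F}$ and $\mathcal I_{M^{-1/2}G}$); that is, $\mathbf D(F\otimes G)=\mathbf D(F)\cdot\mathbf D(G)$. (b) If $\gcd(M,N)>1$, then $\mathbf D(F\otimes G)>\mathbf D(F)\cdot\mathbf D(G)$.
   Context: For $n\ge1$, $F_n$ is the $n\times n$ matrix with entries $e^{2\pi i\,jk/n}$, $j,k\in\{0,\dots,n-1\}$; a Fourier matrix is a Kronecker product $F_{N_1}\otimes\cdots\otimes F_{N_r}$. For a unitary $W$ with no zero entries, $\mathcal I_W=\mathcal C_W^{-1}\mathcal D_W$ where $\mathcal C_W(X)=(X\circ W)W^*$, $\mathcal D_W(X)=W(\overline X\circ W)^*$ ($\circ$ entrywise product). For a rescaled unitary $V$ with no zero entries, $\mathbf D(V)=\dim_{\mathbb R}\{iR\circ V:\ R\text{ real},\ (iR\circ V)V^*\text{ antihermitian}\}$; for a Fourier matrix this equals the number of its entries equal to $1$. *)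

theory Defs
  imports Complex_Main
begin

text \<open>Matrices of size n are represented as functions nat => nat => complex,
  only the entries with both indices < n being relevant.\<close>

definition fourier :: "nat \<Rightarrow> nat \<Rightarrow> nat \<Rightarrow> complex" where
  "fourier n j k = cis (2 * pi * real (j * k) / real n)"

text \<open>Kronecker product A (x) B where B has size m:
  (A (x) B) (i1*m+i2) (j1*m+j2) = A i1 j1 * B i2 j2.\<close>
definition kron :: "(nat \<Rightarrow> nat \<Rightarrow> complex) \<Rightarrow> nat \<Rightarrow> (nat \<Rightarrow> nat \<Rightarrow> complex)
    \<Rightarrow> nat \<Rightarrow> nat \<Rightarrow> complex" where
  "kron A m B i j = A (i div m) (j div m) * B (i mod m) (j mod m)"

text \<open>Fourier matrix F_{N_1} (x) ... (x) F_{N_r}; its size is prod_list Ns.\<close>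
fun fourier_matrix :: "nat list \<Rightarrow> nat \<Rightarrow> nat \<Rightarrow> complex" where
  "fourier_matrix [] = (\<lambda>i j. 1)"
| "fourier_matrix (n # Ns) = kron (fourier n) (prod_list Ns) (fourier_matrix Ns)"

definition num_ones :: "nat \<Rightarrow> (nat \<Rightarrow> nat \<Rightarrow> complex) \<Rightarrow> nat" where
  "num_ones n A = card {(j, k). j < n \<and> k < n \<and> A j k = 1}"

text \<open>The set {iR o V : R real n x n, (iR o V) V^* antihermitian}.\<close>
definition defect_space :: "nat \<Rightarrow> (nat \<Rightarrow> nat \<Rightarrow> complex) \<Rightarrow> (nat \<Rightarrow> nat \<Rightarrow> complex) set" where
  "defect_space n V = {W. \<exists>R :: nat \<Rightarrow> nat \<Rightarrow> real.
      (\<forall>j k. \<not> (j < n \<and> k < n) \<longrightarrow> R j k = 0) \<and>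
      (\<forall>j k. W j k = \<i> * complex_of_real (R j k) * V j k) \<and>
      (\<forall>j<n. \<forall>k<n. (\<Sum>l<n. W k l * cnj (V j l)) = - cnj (\<Sum>l<n. W j l * cnj (V k l)))}"

definition real_lin_indep :: "nat \<Rightarrow> (nat \<Rightarrow> nat \<Rightarrow> complex) set \<Rightarrow> bool" where
  "real_lin_indep n S \<longleftrightarrow> finite S \<and>
     (\<forall>c :: (nat \<Rightarrow> nat \<Rightarrow> complex) \<Rightarrow> real.
        (\<forall>j<n. \<forall>k<n. (\<Sum>W\<in>S. complex_of_real (c W) * W j k) = 0) \<longrightarrow> (\<forall>W\<in>S. c W = 0))"

definition real_dim :: "nat \<Rightarrow> (nat \<Rightarrow> nat \<Rightarrow> complex) set \<Rightarrow> nat" where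
  "real_dim n T = Max {card S | S. S \<subseteq> T \<and> real_lin_indep n S}"

definition defect :: "nat \<Rightarrow> (nat \<Rightarrow> nat \<Rightarrow> complex) \<Rightarrow> nat" where
  "defect n V = real_dim n (defect_space n V)"

end

theory Submission
  imports Defs "HOL-Library.Function_Algebras" "HOL-Computational_Algebra.Primes"
begin


definition good :: "nat \<Rightarrow> (nat \<Rightarrow> nat \<Rightarrow> complex) \<Rightarrow> bool" where
  "good n V \<longleftrightarrow> 0 < n \<and> (\<forall>j l. V j l = V l j) \<and> (\<forall>j l. cnj (V j l) * V j l = 1)
     \<and> (\<forall>j l. V j l ^ n = 1) \<and> (\<forall>l. V 0 l = 1)
     \<and> (\<forall>e<n. \<forall>e'<n. (\<Sum>j<n. V e j * cnj (V e' j)) = (if e = e' then of_nat n else 0))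
     \<and> (\<forall>a<n. \<forall>b<n. \<exists>x<n. \<forall>l<n. V x l = V a l * V b l)
     \<and> (\<forall>a<n. \<exists>x<n. \<forall>l<n. V x l = cnj (V a l))"

definition cc :: "(nat \<Rightarrow> nat \<Rightarrow> complex) \<Rightarrow> nat \<Rightarrow> nat \<Rightarrow> nat \<Rightarrow> nat \<Rightarrow> complex" where
  "cc V e d j l = V e j * cnj (V d l)"

definition hh :: "(nat \<Rightarrow> nat \<Rightarrow> complex) \<Rightarrow> nat \<Rightarrow> nat \<Rightarrow> nat \<Rightarrow> nat \<Rightarrow> real" where
  "hh V e d j l = Re (cc V e d j l) + Im (cc V e d j l)"

lemma hh_c: "complex_of_real (hh V e d j l) = ((1 - \<i>) * cc V e d j l + (1 + \<i>) * cnj (cc V e d j l)) / 2"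
  unfolding hh_def by (simp add: complex_eq_iff algebra_simps)

context
  fixes n :: nat and V :: "nat \<Rightarrow> nat \<Rightarrow> complex"
  assumes G: "good n V"
begin

lemma npos: "0 < n" using G unfolding good_def by blast
lemma Vsym: "V j l = V l j" using G unfolding good_def by blast
lemma Vunit: "cnj (V j l) * V j l = 1" using G unfolding good_def by blast
lemma Vunit': "V j l * cnj (V j l) = 1" using Vunit by (simp add: mult.commute)
lemma Vnz: "V j l \<noteq> 0" using Vunit by (metis mult_zero_right zero_neq_one)
lemma V0: "V 0 l = 1" using G unfolding good_def by blast
lemma Vpow: "V j l ^ n = 1" using G unfolding good_def by blast
lemma Qorth: "e < n \<Longrightarrow> e' < n \<Longrightarrow> (\<Sum>j<n. V e j * cnj (V e' j)) = (if e = e' then of_nat n else 0)"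
  using G unfolding good_def by blast
lemma Vmult: "a < n \<Longrightarrow> b < n \<Longrightarrow> \<exists>x<n. \<forall>l<n. V x l = V a l * V b l"
  using G unfolding good_def by blast
lemma Vconj: "a < n \<Longrightarrow> \<exists>x<n. \<forall>l<n. V x l = cnj (V a l)"
  using G unfolding good_def by blast

lemma Preal: assumes "a < n" "b < n"
  shows "cnj (\<Sum>j<n. V a j * V b j) = (\<Sum>j<n. V a j * V b j)"
proof -
  obtain x where x: "x < n" "\<forall>l<n. V x l = cnj (V b l)" using Vconj[OF assms(2)] by auto
  have "(\<Sum>j<n. V a j * V b j) = (\<Sum>j<n. V a j * cnj (V x j))"
    by (rule sum.cong) (auto simp: x)
  also have "\<dots> = (if a = x then of_nat n else 0)" using Qorth[OF assms(1) x(1)] by simp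
  finally have eq: "(\<Sum>j<n. V a j * V b j) = (if a = x then of_nat n else 0)" .
  show ?thesis unfolding eq by simp
qed

lemma ccsym: "cc V e d j l = cc V j l e d"
  unfolding cc_def using Vsym by metis

lemma hhsym: "hh V e d j l = hh V j l e d"
  unfolding hh_def using ccsym by metis

lemma sumX: "(\<Sum>j<n. \<Sum>l<n. cc V e d j l * cc V e' d' j l)
   = (\<Sum>j<n. V e j * V e' j) * cnj (\<Sum>l<n. V d l * V d' l)"
proof -
  have "(\<Sum>j<n. V e j * V e' j) * cnj (\<Sum>l<n. V d l * V d' l)
      = (\<Sum>j<n. V e j * V e' j) * (\<Sum>l<n. cnj (V d l) * cnj (V d' l))" by simp
  also have "\<dots> = (\<Sum>j<n. \<Sum>l<n. (V e j * V e' j) * (cnj (V d l) * cnj (V d' l)))"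
    by (rule sum_product)
  also have "\<dots> = (\<Sum>j<n. \<Sum>l<n. cc V e d j l * cc V e' d' j l)"
    by (intro sum.cong refl) (simp add: cc_def mult_ac)
  finally show ?thesis by simp
qed

lemma sumY: "(\<Sum>j<n. \<Sum>l<n. cc V e d j l * cnj (cc V e' d' j l))
   = (\<Sum>j<n. V e j * cnj (V e' j)) * cnj (\<Sum>l<n. V d l * cnj (V d' l))"
proof -
  have "(\<Sum>j<n. V e j * cnj (V e' j)) * cnj (\<Sum>l<n. V d l * cnj (V d' l))
      = (\<Sum>j<n. V e j * cnj (V e' j)) * (\<Sum>l<n. cnj (V d l) * V d' l)" by simp
  also have "\<dots> = (\<Sum>j<n. \<Sum>l<n. (V e j * cnj (V e' j)) * (cnj (V d l) * V d' l))"
    by (rule sum_product)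
  also have "\<dots> = (\<Sum>j<n. \<Sum>l<n. cc V e d j l * cnj (cc V e' d' j l))"
    by (intro sum.cong refl) (simp add: cc_def mult_ac)
  finally show ?thesis by simp
qed

lemma ortho:
  assumes "e < n" "d < n" "e' < n" "d' < n"
  shows "(\<Sum>j<n. \<Sum>l<n. hh V e d j l * hh V e' d' j l) = (if e = e' \<and> d = d' then real n ^ 2 else 0)"
proof -
  define X where "X = (\<Sum>j<n. \<Sum>l<n. cc V e d j l * cc V e' d' j l)"
  define Y where "Y = (\<Sum>j<n. \<Sum>l<n. cc V e d j l * cnj (cc V e' d' j l))"
  have cX: "cnj X = X" unfolding X_def sumX using Preal assms by simp
  have Yv: "Y = (if e = e' \<and> d = d' then of_nat n ^ 2 else 0)"
    unfolding Y_def sumY using Qorth assms by (simp add: power2_eq_square)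
  have "complex_of_real (\<Sum>j<n. \<Sum>l<n. hh V e d j l * hh V e' d' j l)
     = (\<Sum>j<n. \<Sum>l<n. ((1 - \<i>)^2 * (cc V e d j l * cc V e' d' j l)
          + 2 * (cc V e d j l * cnj (cc V e' d' j l)) + 2 * cnj (cc V e d j l * cnj (cc V e' d' j l))
          + (1 + \<i>)^2 * cnj (cc V e d j l * cc V e' d' j l)) / 4)"
    by (simp add: hh_c power2_eq_square algebra_simps)
  also have "\<dots> = (\<Sum>j<n. \<Sum>l<n. ((1 - \<i>)^2 * (cc V e d j l * cc V e' d' j l)
          + 2 * (cc V e d j l * cnj (cc V e' d' j l)) + 2 * cnj (cc V e d j l * cnj (cc V e' d' j l))
          + (1 + \<i>)^2 * cnj (cc V e d j l * cc V e' d' j l))) / 4"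
    by (simp only: sum_divide_distrib)
  also have "\<dots> = ((1 - \<i>)^2 * X + 2 * Y + 2 * cnj Y + (1 + \<i>)^2 * cnj X) / 4"
    unfolding X_def Y_def cnj_sum
    by (simp only: sum.distrib sum_distrib_left)
  also have "\<dots> = Y" using cX Yv by (simp add: power2_eq_square algebra_simps)
  also have "Y = complex_of_real (if e = e' \<and> d = d' then real n ^ 2 else 0)" using Yv by simp
  finally show ?thesis by (simp only: of_real_eq_iff)
qed


lemma cond_iff:
  assumes W: "\<forall>j l. W j l = \<i> * complex_of_real (R j l) * V j l"
  shows "((\<Sum>l<n. W k l * cnj (V j l)) = - cnj (\<Sum>l<n. W j l * cnj (V k l)))
     \<longleftrightarrow> (\<Sum>l<n. (complex_of_real (R k l) - complex_of_real (R j l)) * (V k l * cnj (V j l))) = 0"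
proof -
  have "(\<Sum>l<n. W k l * cnj (V j l)) + cnj (\<Sum>l<n. W j l * cnj (V k l))
      = (\<Sum>l<n. \<i> * ((complex_of_real (R k l) - complex_of_real (R j l)) * (V k l * cnj (V j l))))"
    by (simp add: W sum.distrib[symmetric] algebra_simps)
  also have "\<dots> = \<i> * (\<Sum>l<n. (complex_of_real (R k l) - complex_of_real (R j l)) * (V k l * cnj (V j l)))"
    by (simp add: sum_distrib_left)
  finally have eq: "(\<Sum>l<n. W k l * cnj (V j l)) + cnj (\<Sum>l<n. W j l * cnj (V k l))
      = \<i> * (\<Sum>l<n. (complex_of_real (R k l) - complex_of_real (R j l)) * (V k l * cnj (V j l)))" .
  show ?thesis
  proof
    assume "(\<Sum>l<n. W k l * cnj (V j l)) = - cnj (\<Sum>l<n. W j l * cnj (V k l))"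
    then show "(\<Sum>l<n. (complex_of_real (R k l) - complex_of_real (R j l)) * (V k l * cnj (V j l))) = 0"
      using eq by simp
  next
    assume "(\<Sum>l<n. (complex_of_real (R k l) - complex_of_real (R j l)) * (V k l * cnj (V j l))) = 0"
    then show "(\<Sum>l<n. W k l * cnj (V j l)) = - cnj (\<Sum>l<n. W j l * cnj (V k l))"
      using eq by (simp add: add_eq_0_iff2)
  qed
qed

lemma T1:
  assumes "e < n" "d < n" "V e d = 1" "j < n" "k < n"
  shows "(\<Sum>l<n. (cc V e d k l - cc V e d j l) * (V k l * cnj (V j l))) = 0"
proof -
  obtain y where y: "y < n" "\<forall>l<n. V y l = V j l * V d l" using Vmult assms by blast
  have "(\<Sum>l<n. (cc V e d k l - cc V e d j l) * (V k l * cnj (V j l)))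
      = (V e k - V e j) * (\<Sum>l<n. V k l * cnj (V y l))"
    unfolding sum_distrib_left by (intro sum.cong refl) (simp add: cc_def y algebra_simps)
  also have "\<dots> = 0"
  proof (cases "k = y")
    case True
    have "V e k = V e j"
      using y assms True by (metis Vsym mult.right_neutral)
    then show ?thesis by simp
  next
    case False
    then show ?thesis using Qorth[OF assms(5) y(1)] by simp
  qed
  finally show ?thesis .
qed

lemma T2:
  assumes "e < n" "d < n" "V e d = 1" "j < n" "k < n"
  shows "(\<Sum>l<n. (cnj (cc V e d k l) - cnj (cc V e d j l)) * (V k l * cnj (V j l))) = 0"
proof -
  obtain y where y: "y < n" "\<forall>l<n. V y l = V d l * V k l" using Vmult assms by blast
  have "(\<Sum>l<n. (cnj (cc V e d k l) - cnj (cc V e d j l)) * (V k l * cnj (V j l)))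
      = (cnj (V e k) - cnj (V e j)) * (\<Sum>l<n. V y l * cnj (V j l))"
    unfolding sum_distrib_left by (intro sum.cong refl) (simp add: cc_def y algebra_simps)
  also have "\<dots> = 0"
  proof (cases "y = j")
    case True
    have "V e k = V e j"
      using y assms True by (metis Vsym mult.left_neutral)
    then show ?thesis by simp
  next
    case False
    then show ?thesis using Qorth[OF y(1) assms(4)] by simp
  qed
  finally show ?thesis .
qed

lemma basis_cond:
  assumes "e < n" "d < n" "V e d = 1" "j < n" "k < n"
  shows "(\<Sum>l<n. (complex_of_real (hh V e d k l) - complex_of_real (hh V e d j l)) * (V k l * cnj (V j l))) = 0"
proof -
  have "(\<Sum>l<n. (complex_of_real (hh V e d k l) - complex_of_real (hh V e d j l)) * (V k l * cnj (V j l)))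
    = ((1 - \<i>) * (\<Sum>l<n. (cc V e d k l - cc V e d j l) * (V k l * cnj (V j l)))
      + (1 + \<i>) * (\<Sum>l<n. (cnj (cc V e d k l) - cnj (cc V e d j l)) * (V k l * cnj (V j l)))) / 2"
    unfolding hh_c sum_distrib_left sum_divide_distrib sum.distrib[symmetric]
    by (intro sum.cong refl) (simp add: field_simps)
  then show ?thesis using T1[OF assms] T2[OF assms] by simp
qed


lemma Zzero:
  assumes C: "\<forall>j<n. \<forall>k<n. (\<Sum>l<n. (complex_of_real (R k l) - complex_of_real (R j l)) * (V k l * cnj (V j l))) = 0"
    and e: "e < n" and d: "d < n" and ed: "V e d \<noteq> 1"
  shows "(\<Sum>j<n. \<Sum>l<n. complex_of_real (R j l) * cc V e d j l) = 0"
proof -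
  define g where "g j = (\<Sum>l<n. complex_of_real (R j l) * cnj (V d l))" for j
  define \<sigma> where "\<sigma> k = (SOME x. x < n \<and> (\<forall>l<n. V x l = V k l * V d l))" for k
  have \<sigma>: "\<sigma> k < n \<and> (\<forall>l<n. V (\<sigma> k) l = V k l * V d l)" if "k < n" for k
  proof -
    have "\<exists>x. x < n \<and> (\<forall>l<n. V x l = V k l * V d l)" using Vmult[OF that d] by blast
    then show ?thesis unfolding \<sigma>_def by (rule someI_ex)
  qed
  have g\<sigma>: "g (\<sigma> k) = g k" if k: "k < n" for k
  proof -
    have "(\<Sum>l<n. (complex_of_real (R k l) - complex_of_real (R (\<sigma> k) l)) * (V k l * cnj (V (\<sigma> k) l))) = 0"
      using C k \<sigma>[OF k] by blast
    moreover have "V k l * cnj (V (\<sigma> k) l) = cnj (V d l)" if "l < n" for l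
      using \<sigma>[OF k] that Vunit'[of k l] by (simp add: algebra_simps)
    ultimately have "(\<Sum>l<n. (complex_of_real (R k l) - complex_of_real (R (\<sigma> k) l)) * cnj (V d l)) = 0"
      by simp
    then show ?thesis unfolding g_def by (simp add: algebra_simps sum_subtractf)
  qed
  have inj: "inj_on \<sigma> {..<n}"
  proof (rule inj_onI)
    fix a b assume a: "a \<in> {..<n}" and b: "b \<in> {..<n}" and eq: "\<sigma> a = \<sigma> b"
    have "V a l = V b l" if "l < n" for l
    proof -
      have "V (\<sigma> a) l = V a l * V d l" "V (\<sigma> b) l = V b l * V d l" using \<sigma> a b that by auto
      then have "V a l * V d l = V b l * V d l" using eq by metis
      then show ?thesis using Vnz[of d l] by (metis mult_cancel_right)
    qed
    then have "(\<Sum>l<n. V a l * cnj (V b l)) = (\<Sum>l<n. 1)"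
      by (intro sum.cong refl) (simp add: Vunit')
    then have "(if a = b then of_nat n else 0) = (of_nat n :: complex)"
      using Qorth a b by simp
    then show "a = b" using npos by (auto split: if_splits)
  qed
  have img: "\<sigma> ` {..<n} = {..<n}"
    by (rule endo_inj_surj) (use \<sigma> inj in auto)
  have "(\<Sum>j<n. \<Sum>l<n. complex_of_real (R j l) * cc V e d j l) = (\<Sum>j<n. V e j * g j)"
    unfolding g_def sum_distrib_left by (intro sum.cong refl) (simp add: cc_def mult_ac)
  also have "\<dots> = (\<Sum>j\<in>\<sigma> ` {..<n}. V e j * g j)" by (simp add: img)
  also have "\<dots> = (\<Sum>k<n. V e (\<sigma> k) * g (\<sigma> k))" by (simp add: sum.reindex[OF inj])
  also have "\<dots> = (\<Sum>k<n. V e d * (V e k * g k))"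
  proof (intro sum.cong refl)
    fix k assume k: "k \<in> {..<n}"
    have "V e (\<sigma> k) = V k e * V d e" using \<sigma> k e Vsym by (metis lessThan_iff)
    also have "\<dots> = V e k * V e d" using Vsym by metis
    finally show "V e (\<sigma> k) * g (\<sigma> k) = V e d * (V e k * g k)" using g\<sigma> k by simp
  qed
  also have "\<dots> = V e d * (\<Sum>j<n. \<Sum>l<n. complex_of_real (R j l) * cc V e d j l)"
    unfolding g_def sum_distrib_left by (intro sum.cong refl) (simp add: cc_def mult_ac)
  finally have "(1 - V e d) * (\<Sum>j<n. \<Sum>l<n. complex_of_real (R j l) * cc V e d j l) = 0"
    by (simp add: algebra_simps)
  then show ?thesis using ed by simp
qed

lemma Zzero_hh:
  assumes C: "\<forall>j<n. \<forall>k<n. (\<Sum>l<n. (complex_of_real (R k l) - complex_of_real (R j l)) * (V k l * cnj (V j l))) = 0"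
    and e: "e < n" and d: "d < n" and ed: "V e d \<noteq> 1"
  shows "(\<Sum>j<n. \<Sum>l<n. R j l * hh V e d j l) = 0"
proof -
  define Z where "Z = (\<Sum>j<n. \<Sum>l<n. complex_of_real (R j l) * cc V e d j l)"
  have Z0: "Z = 0" unfolding Z_def by (rule Zzero[OF assms])
  have "complex_of_real (\<Sum>j<n. \<Sum>l<n. R j l * hh V e d j l) = ((1 - \<i>) * Z + (1 + \<i>) * cnj Z) / 2"
    unfolding Z_def cnj_sum sum_distrib_left sum_divide_distrib sum.distrib[symmetric] of_real_sum
    by (intro sum.cong refl) (simp add: hh_c field_simps)
  also have "\<dots> = 0" using Z0 by simp
  finally show ?thesis by (simp only: of_real_eq_0_iff)
qed


abbreviation "I2 \<equiv> {..<n} \<times> {..<n}"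

definition hp :: "nat \<times> nat \<Rightarrow> nat \<times> nat \<Rightarrow> real" where
  "hp p q = hh V (fst p) (snd p) (fst q) (snd q)"

lemma hpsym: "hp p q = hp q p" unfolding hp_def using hhsym by metis

lemma ortho2:
  assumes "p \<in> I2" "q \<in> I2"
  shows "(\<Sum>r\<in>I2. hp p r * hp q r) = (if p = q then real n ^ 2 else 0)"
proof -
  have "(\<Sum>r\<in>I2. hp p r * hp q r) = (\<Sum>j<n. \<Sum>l<n. hh V (fst p) (snd p) j l * hh V (fst q) (snd q) j l)"
    unfolding hp_def by (simp add: sum.cartesian_product split_beta)
  also have "\<dots> = (if p = q then real n ^ 2 else 0)"
    using ortho[of "fst p" "snd p" "fst q" "snd q"] assms by (auto simp: prod_eq_iff)
  finally show ?thesis .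
qed

lemma inversion:
  assumes r: "r \<in> I2"
  shows "(\<Sum>p\<in>I2. (\<Sum>q\<in>I2. Rp q * hp p q) * hp p r) = real n ^ 2 * Rp r"
proof -
  have "(\<Sum>p\<in>I2. (\<Sum>q\<in>I2. Rp q * hp p q) * hp p r) = (\<Sum>p\<in>I2. \<Sum>q\<in>I2. Rp q * (hp q p * hp r p))"
    unfolding sum_distrib_right by (intro sum.cong refl) (simp add: hpsym mult_ac)
  also have "\<dots> = (\<Sum>q\<in>I2. \<Sum>p\<in>I2. Rp q * (hp q p * hp r p))" by (rule sum.swap)
  also have "\<dots> = (\<Sum>q\<in>I2. Rp q * (if q = r then real n ^ 2 else 0))"
    unfolding sum_distrib_left[symmetric] by (intro sum.cong refl) (use ortho2 r in auto)
  also have "\<dots> = real n ^ 2 * Rp r" using r by (simp add: if_distrib sum.delta' mult.commute cong: if_cong)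
  finally show ?thesis .
qed

end

definition sc :: "real \<Rightarrow> (nat \<Rightarrow> nat \<Rightarrow> complex) \<Rightarrow> (nat \<Rightarrow> nat \<Rightarrow> complex)" where
  "sc r f = (\<lambda>j k. complex_of_real r * f j k)"

interpretation VS: vector_space sc
  by unfold_locales (auto simp: sc_def fun_eq_iff algebra_simps)

lemma sum_apply2: "(\<Sum>x\<in>A. f x) j k = (\<Sum>x\<in>A. (f x j k :: complex))"
  by (induct A rule: infinite_finite_induct) auto

definition Wb :: "(nat \<Rightarrow> nat \<Rightarrow> complex) \<Rightarrow> nat \<Rightarrow> nat \<times> nat \<Rightarrow> nat \<Rightarrow> nat \<Rightarrow> complex" where
  "Wb V n p = (\<lambda>j l. if j < n \<and> l < n then \<i> * complex_of_real (hh V (fst p) (snd p) j l) * V j l else 0)"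

definition SS :: "(nat \<Rightarrow> nat \<Rightarrow> complex) \<Rightarrow> nat \<Rightarrow> (nat \<times> nat) set" where
  "SS V n = {(e, d). e < n \<and> d < n \<and> V e d = 1}"

context
  fixes n :: nat and V :: "nat \<Rightarrow> nat \<Rightarrow> complex"
  assumes G: "good n V"
begin

lemma SS_sub: "SS V n \<subseteq> {..<n} \<times> {..<n}" unfolding SS_def by auto
lemma SS_fin: "finite (SS V n)" using SS_sub finite_subset by blast

lemma Wb_in:
  assumes p: "p \<in> SS V n"
  shows "Wb V n p \<in> defect_space n V"
proof -
  obtain e d where pe: "p = (e, d)" and e: "e < n" and d: "d < n" and ed: "V e d = 1"
    using p unfolding SS_def by auto
  define R where "R j l = (if j < n \<and> l < n then hh V e d j l else 0)" for j l
  have RW: "\<forall>j l. Wb V n p j l = \<i> * complex_of_real (R j l) * V j l"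
    by (simp add: Wb_def R_def pe)
  have "(\<Sum>l<n. Wb V n p k l * cnj (V j l)) = - cnj (\<Sum>l<n. Wb V n p j l * cnj (V k l))"
    if j: "j < n" and k: "k < n" for j k
  proof -
    have "(\<Sum>l<n. (complex_of_real (R k l) - complex_of_real (R j l)) * (V k l * cnj (V j l)))
       = (\<Sum>l<n. (complex_of_real (hh V e d k l) - complex_of_real (hh V e d j l)) * (V k l * cnj (V j l)))"
      using j k by (intro sum.cong refl) (simp add: R_def)
    also have "\<dots> = 0" using basis_cond[OF G e d ed j k] .
    finally show ?thesis using cond_iff[OF G RW] by blast
  qed
  moreover have "\<forall>j k. \<not> (j < n \<and> k < n) \<longrightarrow> R j k = 0" by (simp add: R_def)
  ultimately show ?thesis unfolding defect_space_def using RW by blast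
qed

lemma Wb_hp: "j < n \<Longrightarrow> l < n \<Longrightarrow> Wb V n p j l = \<i> * complex_of_real (hp V p (j, l)) * V j l"
  by (simp add: Wb_def hp_def[OF G])

lemma indep_core:
  assumes c: "\<forall>r\<in>{..<n} \<times> {..<n}. (\<Sum>p\<in>SS V n. c p * hp V p r) = 0"
    and q: "q \<in> SS V n"
  shows "c q = 0"
proof -
  have qI: "q \<in> {..<n} \<times> {..<n}" using q SS_sub by auto
  have "0 = (\<Sum>r\<in>{..<n} \<times> {..<n}. (\<Sum>p\<in>SS V n. c p * hp V p r) * hp V q r)"
    using c by (intro sum.neutral[symmetric]) auto
  also have "\<dots> = (\<Sum>p\<in>SS V n. \<Sum>r\<in>{..<n} \<times> {..<n}. c p * (hp V p r * hp V q r))"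
    unfolding sum_distrib_right by (subst sum.swap) (simp add: mult_ac)
  also have "\<dots> = (\<Sum>p\<in>SS V n. c p * (if p = q then real n ^ 2 else 0))"
    unfolding sum_distrib_left[symmetric]
  proof (intro sum.cong refl)
    fix p assume "p \<in> SS V n"
    then have "p \<in> {..<n} \<times> {..<n}" using SS_sub by auto
    then show "c p * (\<Sum>r\<in>{..<n} \<times> {..<n}. hp V p r * hp V q r) = c p * (if p = q then real n ^ 2 else 0)"
      using ortho2[OF G _ qI] by simp
  qed
  also have "\<dots> = c q * real n ^ 2" using q SS_fin by (simp add: if_distrib sum.delta' cong: if_cong)
  finally show ?thesis using npos[OF G] by simp
qed

lemma Wb_inj: "inj_on (Wb V n) (SS V n)"
proof (rule inj_onI)
  fix p q assume p: "p \<in> SS V n" and q: "q \<in> SS V n" and eq: "Wb V n p = Wb V n q"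
  have "hp V p r = hp V q r" if r: "r \<in> {..<n} \<times> {..<n}" for r
  proof -
    obtain j l where rr: "r = (j, l)" "j < n" "l < n" using r by auto
    have "\<i> * complex_of_real (hp V p (j, l)) * V j l = \<i> * complex_of_real (hp V q (j, l)) * V j l"
      using eq Wb_hp rr by metis
    then show ?thesis using Vnz[OF G, of j l] rr by simp
  qed
  then have "(\<Sum>r\<in>{..<n} \<times> {..<n}. hp V p r * hp V p r) = (\<Sum>r\<in>{..<n} \<times> {..<n}. hp V p r * hp V q r)"
    by (intro sum.cong refl) simp
  moreover have pI: "p \<in> {..<n} \<times> {..<n}" "q \<in> {..<n} \<times> {..<n}" using p q SS_sub by auto
  ultimately have "real n ^ 2 = (if p = q then real n ^ 2 else 0)"
    using ortho2[OF G pI(1) pI(1)] ortho2[OF G pI(1) pI(2)] by simp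
  then show "p = q" using npos[OF G] by (auto split: if_splits)
qed


lemma Wb_indep: "real_lin_indep n (Wb V n ` SS V n)"
  unfolding real_lin_indep_def
proof (intro conjI allI impI ballI)
  show "finite (Wb V n ` SS V n)" using SS_fin by simp
  fix c :: "(nat \<Rightarrow> nat \<Rightarrow> complex) \<Rightarrow> real" and W
  assume hyp: "\<forall>j<n. \<forall>k<n. (\<Sum>W\<in>Wb V n ` SS V n. complex_of_real (c W) * W j k) = 0"
    and W: "W \<in> Wb V n ` SS V n"
  have "(\<Sum>p\<in>SS V n. c (Wb V n p) * hp V p r) = 0" if r: "r \<in> {..<n} \<times> {..<n}" for r
  proof -
    obtain j k where rr: "r = (j, k)" "j < n" "k < n" using r by auto
    have "0 = (\<Sum>W\<in>Wb V n ` SS V n. complex_of_real (c W) * W j k)" using hyp rr by simp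
    also have "\<dots> = (\<Sum>p\<in>SS V n. complex_of_real (c (Wb V n p)) * Wb V n p j k)"
      by (simp add: sum.reindex[OF Wb_inj])
    also have "\<dots> = (\<Sum>p\<in>SS V n. (\<i> * V j k) * complex_of_real (c (Wb V n p) * hp V p (j, k)))"
      using rr by (intro sum.cong refl) (simp add: Wb_hp mult_ac)
    also have "\<dots> = (\<i> * V j k) * complex_of_real (\<Sum>p\<in>SS V n. c (Wb V n p) * hp V p (j, k))"
      by (simp add: sum_distrib_left)
    finally have h: "(\<i> * V j k) * complex_of_real (\<Sum>p\<in>SS V n. c (Wb V n p) * hp V p (j, k)) = 0"
      by (rule sym)
    then have "complex_of_real (\<Sum>p\<in>SS V n. c (Wb V n p) * hp V p (j, k)) = 0"
      using Vnz[OF G, of j k] by (simp del: of_real_sum)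
    then show ?thesis using rr by (simp only: of_real_eq_0_iff)
  qed
  then have "\<forall>q\<in>SS V n. c (Wb V n q) = 0"
    using indep_core[of "\<lambda>p. c (Wb V n p)"] by blast
  then show "c W = 0" using W by blast
qed

lemma indep_VS: "real_lin_indep n T \<Longrightarrow> VS.independent T"
proof -
  assume T: "real_lin_indep n T"
  then have fT: "finite T" unfolding real_lin_indep_def by blast
  show ?thesis
  proof (rule VS.independent_if_scalars_zero[OF fT])
    fix f x assume sum0: "(\<Sum>x\<in>T. sc (f x) x) = 0" and x: "x \<in> T"
    have "\<forall>j<n. \<forall>k<n. (\<Sum>W\<in>T. complex_of_real (f W) * W j k) = 0"
    proof (intro allI impI)
      fix j k
      have "(\<Sum>W\<in>T. complex_of_real (f W) * W j k) = (\<Sum>x\<in>T. sc (f x) x) j k"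
        by (simp add: sum_apply2 sc_def)
      then show "(\<Sum>W\<in>T. complex_of_real (f W) * W j k) = 0" using sum0 by simp
    qed
    then show "f x = 0" using T x unfolding real_lin_indep_def by blast
  qed
qed

lemma span_D: "defect_space n V \<subseteq> VS.span (Wb V n ` SS V n)"
proof
  fix W assume "W \<in> defect_space n V"
  then obtain R where R0: "\<forall>j k. \<not> (j < n \<and> k < n) \<longrightarrow> R j k = 0"
    and RW: "\<forall>j k. W j k = \<i> * complex_of_real (R j k) * V j k"
    and cond: "\<forall>j<n. \<forall>k<n. (\<Sum>l<n. W k l * cnj (V j l)) = - cnj (\<Sum>l<n. W j l * cnj (V k l))"
    unfolding defect_space_def by blast
  have C: "\<forall>j<n. \<forall>k<n. (\<Sum>l<n. (complex_of_real (R k l) - complex_of_real (R j l)) * (V k l * cnj (V j l))) = 0"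
    using cond cond_iff[OF G RW] by blast
  define Rp where "Rp q = R (fst q) (snd q)" for q
  define a where "a p = (\<Sum>q\<in>{..<n} \<times> {..<n}. Rp q * hp V p q)" for p
  have a0: "a p = 0" if p: "p \<in> {..<n} \<times> {..<n}" and pS: "p \<notin> SS V n" for p
  proof -
    obtain e d where pe: "p = (e, d)" "e < n" "d < n" using p by auto
    have ed: "V e d \<noteq> 1" using pS pe unfolding SS_def by auto
    have "a p = (\<Sum>j<n. \<Sum>l<n. R j l * hh V e d j l)"
      unfolding a_def Rp_def hp_def[OF G] pe by (simp add: sum.cartesian_product split_beta)
    also have "\<dots> = 0" by (rule Zzero_hh[OF G C pe(2) pe(3) ed])
    finally show ?thesis .
  qed
  have Rexp: "Rp r = (\<Sum>p\<in>SS V n. a p / real n ^ 2 * hp V p r)" if r: "r \<in> {..<n} \<times> {..<n}" for r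
  proof -
    have "(\<Sum>p\<in>SS V n. a p * hp V p r) = (\<Sum>p\<in>{..<n} \<times> {..<n}. a p * hp V p r)"
      by (rule sum.mono_neutral_left) (use SS_sub a0 in auto)
    also have "\<dots> = real n ^ 2 * Rp r" unfolding a_def by (rule inversion[OF G r])
    finally have "(\<Sum>p\<in>SS V n. a p * hp V p r) = real n ^ 2 * Rp r" .
    then show ?thesis using npos[OF G]
      by (simp add: sum_divide_distrib[symmetric] field_simps)
  qed
  have "W = (\<Sum>p\<in>SS V n. sc (a p / real n ^ 2) (Wb V n p))"
  proof (intro ext)
    fix j k
    show "W j k = (\<Sum>p\<in>SS V n. sc (a p / real n ^ 2) (Wb V n p)) j k"
    proof (cases "j < n \<and> k < n")
      case True
      have "(\<Sum>p\<in>SS V n. sc (a p / real n ^ 2) (Wb V n p)) j k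
          = (\<Sum>p\<in>SS V n. (\<i> * V j k) * complex_of_real (a p / real n ^ 2 * hp V p (j, k)))"
        unfolding sum_apply2 sc_def using True by (intro sum.cong refl) (simp add: Wb_hp mult_ac)
      also have "\<dots> = (\<i> * V j k) * complex_of_real (Rp (j, k))"
        using Rexp[of "(j, k)"] True by (simp add: sum_distrib_left)
      finally show ?thesis using RW by (simp add: Rp_def mult_ac)
    next
      case False
      then have "Wb V n p j k = 0" for p unfolding Wb_def by auto
      then show ?thesis using RW R0 False by (simp add: sum_apply2 sc_def)
    qed
  qed
  moreover have "(\<Sum>p\<in>SS V n. sc (a p / real n ^ 2) (Wb V n p)) \<in> VS.span (Wb V n ` SS V n)"
  proof (rule VS.span_sum)
    fix p assume "p \<in> SS V n"
    then have "Wb V n p \<in> VS.span (Wb V n ` SS V n)" by (intro VS.span_base) simp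
    then show "sc (a p / real n ^ 2) (Wb V n p) \<in> VS.span (Wb V n ` SS V n)" by (rule VS.span_scale)
  qed
  ultimately show "W \<in> VS.span (Wb V n ` SS V n)" by simp
qed

theorem defect_eq_num_ones: "defect n V = num_ones n V"
proof -
  let ?B = "Wb V n ` SS V n"
  let ?A = "{card S |S. S \<subseteq> defect_space n V \<and> real_lin_indep n S}"
  have cB: "card ?B = card (SS V n)" by (rule card_image[OF Wb_inj])
  have fB: "finite ?B" using SS_fin by simp
  have le: "y \<le> card ?B" if "y \<in> ?A" for y
  proof -
    obtain T where T: "y = card T" "T \<subseteq> defect_space n V" "real_lin_indep n T" using \<open>y \<in> ?A\<close> by blast
    have "T \<subseteq> VS.span ?B" using T span_D by blast
    then show ?thesis using VS.independent_span_bound[OF fB indep_VS[OF T(3)]] T by simp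
  qed
  have inA: "card ?B \<in> ?A" using Wb_in Wb_indep by blast
  have fA: "finite ?A" by (rule finite_subset[of _ "{..card ?B}"]) (use le in auto)
  have "defect n V = card ?B"
    unfolding defect_def real_dim_def by (rule Max_eqI[OF fA le inA])
  also have "\<dots> = card (SS V n)" by (rule cB)
  also have "\<dots> = num_ones n V" unfolding num_ones_def SS_def by simp
  finally show ?thesis .
qed

end

section \<open>Fourier matrices are good\<close>

lemma fourier_add: "fourier n (a + b) l = fourier n a l * fourier n b l"
  by (simp add: fourier_def cis_mult add_divide_distrib distrib_right algebra_simps)

lemma fourier_mult_n: "0 < n \<Longrightarrow> fourier n (n * q) l = 1"
proof -
  assume n: "0 < n"
  have "2 * pi * real (n * q * l) / real n = 2 * pi * real (q * l)" using n by (simp add: field_simps)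
  then show ?thesis unfolding fourier_def by simp
qed

lemma fourier_mod: "0 < n \<Longrightarrow> fourier n (a mod n) l = fourier n a l"
proof -
  assume n: "0 < n"
  have "fourier n a l = fourier n (a mod n + n * (a div n)) l" by simp
  also have "\<dots> = fourier n (a mod n) l" by (simp only: fourier_add fourier_mult_n[OF n] mult_1_right)
  finally show ?thesis by simp
qed

lemma fourier_unit: "cnj (fourier n j l) * fourier n j l = 1"
  by (simp add: fourier_def cis_cnj cis_mult)

lemma fourier_pow: "0 < n \<Longrightarrow> fourier n j l ^ n = 1"
proof -
  assume n: "0 < n"
  have "real n * (2 * pi * real (j * l) / real n) = 2 * pi * real (j * l)" using n by simp
  then show ?thesis unfolding fourier_def DeMoivre by simp
qed

lemma fourier_orth:
  assumes n: "0 < n" and e: "e < n" and e': "e' < n"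
  shows "(\<Sum>j<n. fourier n e j * cnj (fourier n e' j)) = (if e = e' then of_nat n else 0)"
proof (cases "e = e'")
  case True
  then show ?thesis using fourier_unit by (simp add: mult.commute)
next
  case False
  define z where "z = cis (2 * pi * (real e - real e') / real n)"
  have tm: "fourier n e j * cnj (fourier n e' j) = z ^ j" for j
    unfolding fourier_def z_def DeMoivre cis_cnj cis_mult
    by (simp add: diff_divide_distrib algebra_simps)
  have zn: "z ^ n = 1"
  proof -
    have "real n * (2 * pi * (real e - real e') / real n) = 2 * pi * real_of_int (int e - int e')"
      using n by simp
    then show ?thesis unfolding z_def DeMoivre by simp
  qed
  have z1: "z \<noteq> 1"
  proof
    assume "z = 1"
    then have "cos (2 * pi * (real e - real e') / real n) = 1" unfolding z_def
      by (metis cis.sel(1) one_complex.sel(1))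
    then obtain k :: int where k: "2 * pi * (real e - real e') / real n = real_of_int k * 2 * pi"
      using cos_one_2pi_int by blast
    have "2 * pi * ((real e - real e') / real n) = 2 * pi * real_of_int k"
      using k by (simp add: mult_ac)
    then have k1: "(real e - real e') / real n = real_of_int k"
      using pi_gt_zero by (metis mult_cancel_left mult_eq_0_iff times_divide_eq_right zero_neq_numeral less_irrefl)
    then have k': "real e - real e' = real_of_int k * real n" using n by (simp add: divide_eq_eq)
    have "\<bar>real e - real e'\<bar> < real n" using e e' by auto
    then have "\<bar>real_of_int k\<bar> * real n < 1 * real n" using k' by (simp add: abs_mult)
    then have "\<bar>real_of_int k\<bar> < 1" using n by (simp only: mult_less_cancel_right)
    then have "k = 0" by linarith
    then show False using k' False by simp
  qed
  have "(\<Sum>j<n. fourier n e j * cnj (fourier n e' j)) = (\<Sum>j<n. z ^ j)" by (simp add: tm)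
  also have "\<dots> = 0" using geometric_sum[OF z1, of n] zn by simp
  finally show ?thesis using False by simp
qed

lemma good_fourier: "0 < n \<Longrightarrow> good n (fourier n)"
  unfolding good_def
proof (intro conjI allI impI)
  assume n: "0 < n"
  show "0 < n" by fact
  fix j l show "fourier n j l = fourier n l j" by (simp add: fourier_def mult.commute)
next
  fix j l show "cnj (fourier n j l) * fourier n j l = 1" by (rule fourier_unit)
next
  fix j l assume "0 < n" then show "fourier n j l ^ n = 1" by (rule fourier_pow)
next
  fix l show "fourier n 0 l = 1" by (simp add: fourier_def)
next
  fix e e' assume "0 < n" "e < n" "e' < n"
  then show "(\<Sum>j<n. fourier n e j * cnj (fourier n e' j)) = (if e = e' then of_nat n else 0)"
    by (rule fourier_orth)
next
  fix a b assume n: "0 < n" and "a < n" "b < n"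
  show "\<exists>x<n. \<forall>l<n. fourier n x l = fourier n a l * fourier n b l"
    by (rule exI[of _ "(a + b) mod n"]) (simp add: n fourier_mod fourier_add)
next
  fix a assume n: "0 < n" and "a < n"
  have "fourier n ((n - a) mod n) l = cnj (fourier n a l)" for l
  proof -
    have "fourier n ((n - a) mod n) l * fourier n a l = fourier n n l"
      using \<open>a < n\<close> by (simp add: fourier_mod[OF n] fourier_add[symmetric])
    also have "\<dots> = 1" using fourier_mult_n[OF n, of 1 l] by simp
    finally have h: "fourier n ((n - a) mod n) l * fourier n a l = 1" .
    have "fourier n a l \<noteq> 0" using fourier_unit[of n a l] by auto
    then show ?thesis using h fourier_unit[of n a l] by (metis mult_cancel_right)
  qed
  then show "\<exists>x<n. \<forall>l<n. fourier n x l = cnj (fourier n a l)"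
    using n by (intro exI[of _ "(n - a) mod n"]) auto
qed




lemma idx_lt: "(xa::nat) < n \<Longrightarrow> xb < m \<Longrightarrow> xa * m + xb < n * m"
proof -
  assume a: "xa < n" and b: "xb < m"
  have "xa * m + xb < xa * m + m" using b by simp
  also have "\<dots> = Suc xa * m" by simp
  also have "\<dots> \<le> n * m" using a by (intro mult_le_mono1) simp
  finally show ?thesis .
qed

lemma sum_split:
  fixes n m :: nat
  assumes m: "0 < m"
  shows "(\<Sum>j<n*m. f j) = (\<Sum>a<n. \<Sum>b<m. f (a * m + b))"
proof -
  have bij: "bij_betw (\<lambda>p. fst p * m + snd p) ({..<n} \<times> {..<m}) {..<n*m}"
    by (rule bij_betw_byWitness[where f' = "\<lambda>j. (j div m, j mod m)"])
       (use m in \<open>auto simp: idx_lt less_mult_imp_div_less\<close>)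
  have "(\<Sum>j<n*m. f j) = (\<Sum>p\<in>{..<n} \<times> {..<m}. f (fst p * m + snd p))"
    by (rule sum.reindex_bij_betw[OF bij, symmetric])
  also have "\<dots> = (\<Sum>a<n. \<Sum>b<m. f (a * m + b))"
    by (simp add: sum.cartesian_product split_beta)
  finally show ?thesis .
qed

lemma kron_idx: "0 < (m::nat) \<Longrightarrow> xb < m \<Longrightarrow> (xa * m + xb) div m = xa \<and> (xa * m + xb) mod m = xb"
  by simp

lemma good_kron:
  assumes A: "good n A" and B: "good m B"
  shows "good (n * m) (kron A m B)"
proof -
  have n: "0 < n" and m: "0 < m" using npos[OF A] npos[OF B] .
  note Asym = Vsym[OF A] and Bsym = Vsym[OF B] and Aunit = Vunit[OF A] and Bunit = Vunit[OF B]
  note Apow = Vpow[OF A] and Bpow = Vpow[OF B] and A0 = V0[OF A] and B0 = V0[OF B]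
  note Aorth = Qorth[OF A] and Borth = Qorth[OF B] and Amult = Vmult[OF A] and Bmult = Vmult[OF B]
  note Aconj = Vconj[OF A] and Bconj = Vconj[OF B]
  have divlt: "j < n * m \<Longrightarrow> j div m < n" for j by (simp add: less_mult_imp_div_less)
  have modlt: "j mod m < m" for j using m by simp
  show ?thesis
    unfolding good_def
  proof (intro conjI allI impI)
    show "0 < n * m" using n m by simp
  next
    fix j l show "kron A m B j l = kron A m B l j" unfolding kron_def using Asym Bsym by metis
  next
    fix j l show "cnj (kron A m B j l) * kron A m B j l = 1"
      unfolding kron_def using Aunit Bunit by (simp add: algebra_simps)
  next
    fix j l show "kron A m B j l ^ (n * m) = 1"
      unfolding kron_def power_mult_distrib
      by (metis Apow Bpow mult.commute power_mult power_one mult_1_right)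
  next
    fix l show "kron A m B 0 l = 1" unfolding kron_def using A0 B0 by simp
  next
    fix e e' assume e: "e < n * m" and e': "e' < n * m"
    have "(\<Sum>j<n * m. kron A m B e j * cnj (kron A m B e' j))
        = (\<Sum>a<n. \<Sum>b<m. (A (e div m) a * cnj (A (e' div m) a)) * (B (e mod m) b * cnj (B (e' mod m) b)))"
      unfolding sum_split[OF m] kron_def by (intro sum.cong refl) (simp add: m mult_ac)
    also have "\<dots> = (\<Sum>a<n. A (e div m) a * cnj (A (e' div m) a)) * (\<Sum>b<m. B (e mod m) b * cnj (B (e' mod m) b))"
      by (simp add: sum_product)
    also have "\<dots> = (if e div m = e' div m then of_nat n else 0) * (if e mod m = e' mod m then of_nat m else 0)"
      using Aorth[OF divlt[OF e] divlt[OF e']] Borth[OF modlt modlt] by simp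
    also have "\<dots> = (if e = e' then of_nat (n * m) else 0)"
    proof -
      have "e = e' \<longleftrightarrow> e div m = e' div m \<and> e mod m = e' mod m" by (metis div_mult_mod_eq)
      then show ?thesis by auto
    qed
    finally show "(\<Sum>j<n * m. kron A m B e j * cnj (kron A m B e' j)) = (if e = e' then of_nat (n * m) else 0)" .
  next
    fix a b assume a: "a < n * m" and b: "b < n * m"
    obtain xa where xa: "xa < n" "\<forall>l<n. A xa l = A (a div m) l * A (b div m) l"
      using Amult[OF divlt[OF a] divlt[OF b]] by blast
    obtain xb where xb: "xb < m" "\<forall>l<m. B xb l = B (a mod m) l * B (b mod m) l"
      using Bmult[OF modlt modlt] by blast
    show "\<exists>x<n * m. \<forall>l<n * m. kron A m B x l = kron A m B a l * kron A m B b l"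
    proof (intro exI conjI allI impI)
      show "xa * m + xb < n * m" by (rule idx_lt[OF xa(1) xb(1)])
      fix l assume l: "l < n * m"
      show "kron A m B (xa * m + xb) l = kron A m B a l * kron A m B b l"
        unfolding kron_def kron_idx[OF m xb(1), THEN conjunct1] kron_idx[OF m xb(1), THEN conjunct2] using xa(2) xb(2) divlt[OF l] modlt
        by (simp add: mult_ac)
    qed
  next
    fix a assume a: "a < n * m"
    obtain xa where xa: "xa < n" "\<forall>l<n. A xa l = cnj (A (a div m) l)"
      using Aconj[OF divlt[OF a]] by blast
    obtain xb where xb: "xb < m" "\<forall>l<m. B xb l = cnj (B (a mod m) l)"
      using Bconj[OF modlt] by blast
    show "\<exists>x<n * m. \<forall>l<n * m. kron A m B x l = cnj (kron A m B a l)"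
    proof (intro exI conjI allI impI)
      show "xa * m + xb < n * m" by (rule idx_lt[OF xa(1) xb(1)])
      fix l assume l: "l < n * m"
      show "kron A m B (xa * m + xb) l = cnj (kron A m B a l)"
        unfolding kron_def kron_idx[OF m xb(1), THEN conjunct1] kron_idx[OF m xb(1), THEN conjunct2] using xa(2) xb(2) divlt[OF l] modlt
        by simp
    qed
  qed
qed

lemma good_one: "good 1 (\<lambda>i j. 1)"
  unfolding good_def by auto

lemma good_fm: "\<forall>n\<in>set Ns. n \<ge> 1 \<Longrightarrow> good (prod_list Ns) (fourier_matrix Ns)"
proof (induction Ns)
  case Nil
  then show ?case using good_one by simp
next
  case (Cons n Ns)
  then have "good n (fourier n)" by (intro good_fourier) simp
  moreover have "good (prod_list Ns) (fourier_matrix Ns)" using Cons by simp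
  ultimately show ?case by (simp add: good_kron)
qed



lemma pow_gcd:
  fixes a :: complex
  assumes n: "0 < n" and an: "a ^ n = 1" and am: "a ^ m = 1"
  shows "a ^ gcd n m = 1"
proof -
  obtain x y where xy: "n * x = m * y + gcd n m" using bezout_nat[of n m] n by auto
  have "1 = a ^ (n * x)" using an by (simp add: power_mult)
  also have "\<dots> = a ^ (m * y) * a ^ gcd n m" by (simp add: xy power_add)
  also have "\<dots> = a ^ gcd n m" using am by (simp add: power_mult)
  finally show ?thesis by simp
qed

lemma prod_one_iff:
  assumes A: "good n A" and B: "good m B" and g: "gcd n m = 1"
  shows "A a b * B c d = 1 \<longleftrightarrow> A a b = 1 \<and> B c d = 1"
proof
  assume h: "A a b * B c d = 1"
  have "(A a b * B c d) ^ m = 1" using h by simp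
  then have "A a b ^ m = 1" using Vpow[OF B, of c d] by (simp add: power_mult_distrib)
  then have "A a b ^ gcd n m = 1" using pow_gcd[OF npos[OF A] Vpow[OF A]] by blast
  then have "A a b = 1" using g by simp
  then show "A a b = 1 \<and> B c d = 1" using h by simp
qed simp

definition SK :: "nat \<Rightarrow> (nat \<Rightarrow> nat \<Rightarrow> complex) \<Rightarrow> (nat \<times> nat) set" where
  "SK n V = {(j, k). j < n \<and> k < n \<and> V j k = 1}"

lemma num_ones_SK: "num_ones n V = card (SK n V)" unfolding num_ones_def SK_def ..

definition gk :: "nat \<Rightarrow> (nat \<times> nat) \<times> (nat \<times> nat) \<Rightarrow> nat \<times> nat" where
  "gk m x = (fst (fst x) * m + fst (snd x), snd (fst x) * m + snd (snd x))"

lemma gk_inj: "0 < m \<Longrightarrow> inj_on (gk m) (SK n A \<times> SK m B)"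
proof (rule inj_onI)
  fix x y assume m: "0 < m" and x: "x \<in> SK n A \<times> SK m B" and y: "y \<in> SK n A \<times> SK m B"
    and eq: "gk m x = gk m y"
  have xb: "fst (snd x) < m" "snd (snd x) < m" and yb: "fst (snd y) < m" "snd (snd y) < m"
    using x y unfolding SK_def by auto
  have "(fst (fst x) * m + fst (snd x)) div m = (fst (fst y) * m + fst (snd y)) div m"
    "(fst (fst x) * m + fst (snd x)) mod m = (fst (fst y) * m + fst (snd y)) mod m"
    "(snd (fst x) * m + snd (snd x)) div m = (snd (fst y) * m + snd (snd y)) div m"
    "(snd (fst x) * m + snd (snd x)) mod m = (snd (fst y) * m + snd (snd y)) mod m"
    using eq unfolding gk_def by auto
  then show "x = y" using xb yb m by (simp add: prod_eq_iff)
qed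

lemma gk_sub:
  assumes A: "good n A" and B: "good m B"
  shows "gk m ` (SK n A \<times> SK m B) \<subseteq> SK (n * m) (kron A m B)"
proof
  fix y assume "y \<in> gk m ` (SK n A \<times> SK m B)"
  then obtain a b c d where x: "(a, b) \<in> SK n A" "(c, d) \<in> SK m B" and y: "y = gk m ((a, b), (c, d))"
    by auto
  have m: "0 < m" using npos[OF B] .
  have lt: "a < n" "b < n" "c < m" "d < m" "A a b = 1" "B c d = 1" using x unfolding SK_def by auto
  show "y \<in> SK (n * m) (kron A m B)"
    unfolding y gk_def SK_def kron_def using lt m idx_lt[of a n c m] idx_lt[of b n d m] by simp
qed

lemma count_coprime:
  assumes A: "good n A" and B: "good m B" and g: "gcd n m = 1"
  shows "num_ones (n * m) (kron A m B) = num_ones n A * num_ones m B"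
proof -
  have m: "0 < m" using npos[OF B] .
  have "SK (n * m) (kron A m B) \<subseteq> gk m ` (SK n A \<times> SK m B)"
  proof
    fix y assume y: "y \<in> SK (n * m) (kron A m B)"
    obtain i j where ij: "y = (i, j)" "i < n * m" "j < n * m" "kron A m B i j = 1"
      using y unfolding SK_def by auto
    have "A (i div m) (j div m) = 1 \<and> B (i mod m) (j mod m) = 1"
      using ij(4) prod_one_iff[OF A B g] unfolding kron_def by blast
    moreover have "i div m < n" "j div m < n" using ij less_mult_imp_div_less by auto
    moreover have "i mod m < m" "j mod m < m" using m by auto
    ultimately have "((i div m, j div m), (i mod m, j mod m)) \<in> SK n A \<times> SK m B"
      unfolding SK_def by auto
    moreover have "y = gk m ((i div m, j div m), (i mod m, j mod m))"
      unfolding gk_def ij by simp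
    ultimately show "y \<in> gk m ` (SK n A \<times> SK m B)" by blast
  qed
  then have "SK (n * m) (kron A m B) = gk m ` (SK n A \<times> SK m B)" using gk_sub[OF A B] by blast
  then have "card (SK (n * m) (kron A m B)) = card (SK n A \<times> SK m B)"
    using card_image[OF gk_inj[OF m]] by simp
  then show ?thesis unfolding num_ones_SK card_cartesian_product .
qed

lemma count_strict:
  assumes A: "good n A" and B: "good m B"
    and i1: "i1 < n" "j1 < n" and i2: "i2 < m" "j2 < m"
    and ne: "A i1 j1 \<noteq> 1" and prod: "A i1 j1 * B i2 j2 = 1"
  shows "num_ones (n * m) (kron A m B) > num_ones n A * num_ones m B"
proof -
  have m: "0 < m" using npos[OF B] .
  let ?y = "(i1 * m + i2, j1 * m + j2)"
  have yin: "?y \<in> SK (n * m) (kron A m B)"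
    unfolding SK_def kron_def using i1 i2 m prod idx_lt[of i1 n i2 m] idx_lt[of j1 n j2 m] by simp
  have ynot: "?y \<notin> gk m ` (SK n A \<times> SK m B)"
  proof
    assume "?y \<in> gk m ` (SK n A \<times> SK m B)"
    then obtain a b c d where x: "(a, b) \<in> SK n A" "(c, d) \<in> SK m B" and y: "?y = gk m ((a, b), (c, d))"
      by auto
    have lt: "c < m" "d < m" "A a b = 1" using x unfolding SK_def by auto
    have "a = i1" "b = j1"
    proof -
      have "(i1 * m + i2) div m = (a * m + c) div m" "(j1 * m + j2) div m = (b * m + d) div m"
        using y unfolding gk_def by auto
      then show "a = i1" "b = j1" using lt i2 m by auto
    qed
    then show False using lt ne by simp
  qed
  have fin: "finite (SK (n * m) (kron A m B))"
    by (rule finite_subset[of _ "{..<n*m} \<times> {..<n*m}"]) (auto simp: SK_def)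
  have "gk m ` (SK n A \<times> SK m B) \<subset> SK (n * m) (kron A m B)"
    using gk_sub[OF A B] yin ynot by blast
  then have "card (gk m ` (SK n A \<times> SK m B)) < card (SK (n * m) (kron A m B))"
    by (rule psubset_card_mono[OF fin])
  then show ?thesis
    unfolding num_ones_SK card_image[OF gk_inj[OF m]] card_cartesian_product .
qed

lemma fm_root:
  assumes "\<forall>n\<in>set Ns. n \<ge> 1" and p: "prime (p::nat)" and pd: "p dvd prod_list Ns"
  shows "\<exists>i j. i < prod_list Ns \<and> j < prod_list Ns \<and> fourier_matrix Ns i j = fourier p k 1"
  using assms(1) pd
proof (induction Ns)
  case Nil
  then show ?case using p by simp
next
  case (Cons n Ns)
  let ?m = "prod_list Ns"
  have Gm: "good ?m (fourier_matrix Ns)" using Cons.prems by (intro good_fm) simp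
  have m: "0 < ?m" using npos[OF Gm] .
  have n: "1 \<le> n" using Cons.prems by simp
  have FM0: "fourier_matrix Ns 0 0 = 1" using V0[OF Gm] .
  have "p dvd n * ?m" using Cons.prems by simp
  then consider "p dvd n" | "p dvd ?m" using prime_dvd_mult_iff[OF p] by blast
  then show ?case
  proof cases
    case 1
    then obtain q where q: "n = p * q" by blast
    have p2: "2 \<le> p" using p prime_ge_2_nat by blast
    have q1: "1 \<le> q" using q n by (cases q) auto
    have qn: "q < n" using q p2 q1 by simp
    have pn: "p \<le> n" using q q1 by simp
    have "k mod p < p" using p2 by simp
    then have kp: "k mod p < n" using pn by linarith
    have val: "fourier n q (k mod p) = fourier p k 1"
    proof -
      have "fourier n q (k mod p) = fourier p (k mod p) 1"
        unfolding fourier_def q using q1 by (simp add: field_simps)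
      also have "\<dots> = fourier p k 1" using fourier_mod p2 by simp
      finally show ?thesis .
    qed
    show ?thesis
    proof (intro exI conjI)
      show "q * ?m + 0 < prod_list (n # Ns)" using idx_lt[OF qn m] by simp
      show "(k mod p) * ?m + 0 < prod_list (n # Ns)" using idx_lt[OF kp m] by simp
      show "fourier_matrix (n # Ns) (q * ?m + 0) ((k mod p) * ?m + 0) = fourier p k 1"
        using m val FM0 by (simp add: kron_def)
    qed
  next
    case 2
    then obtain i j where ij: "i < ?m" "j < ?m" "fourier_matrix Ns i j = fourier p k 1"
      using Cons by auto
    have f00: "fourier n 0 0 = 1" by (simp add: fourier_def)
    show ?thesis
    proof (intro exI conjI)
      show "0 * ?m + i < prod_list (n # Ns)" using idx_lt[OF _ ij(1), of 0 n] n by simp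
      show "0 * ?m + j < prod_list (n # Ns)" using idx_lt[OF _ ij(2), of 0 n] n by simp
      show "fourier_matrix (n # Ns) (0 * ?m + i) (0 * ?m + j) = fourier p k 1"
        using ij f00 by (simp add: kron_def)
    qed
  qed
qed

lemma fourier_p11:
  assumes p2: "2 \<le> p" shows "fourier p 1 1 \<noteq> 1"
proof
  assume "fourier p 1 1 = 1"
  then have "cos (2 * pi * real (1 * 1) / real p) = 1" unfolding fourier_def
    by (metis cis.sel(1) one_complex.sel(1))
  then obtain k :: int where k: "2 * pi * real (1 * 1) / real p = real_of_int k * 2 * pi"
    using cos_one_2pi_int by blast
  have "2 * pi * (1 / real p) = 2 * pi * real_of_int k" using k by (simp add: mult_ac)
  then have k1: "1 / real p = real_of_int k"
    using pi_gt_zero by (metis mult_cancel_left mult_eq_0_iff zero_neq_numeral less_irrefl)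
  have "0 < 1 / real p" "1 / real p < 1" using p2 by auto
  then have "0 < real_of_int k" "real_of_int k < 1" using k1 by auto
  then have "0 < k" "k < 1" by simp_all
  then show False by simp
qed

theorem lemma5p6:
  fixes Fs Gs :: "nat list"
  assumes "Fs \<noteq> []" and "Gs \<noteq> []"
    and "\<forall>n\<in>set Fs. n \<ge> 1" and "\<forall>n\<in>set Gs. n \<ge> 1"
  shows "(gcd (prod_list Fs) (prod_list Gs) = 1 \<longrightarrow>
           num_ones (prod_list Fs * prod_list Gs)
               (kron (fourier_matrix Fs) (prod_list Gs) (fourier_matrix Gs))
             = num_ones (prod_list Fs) (fourier_matrix Fs) * num_ones (prod_list Gs) (fourier_matrix Gs)
           \<and> defect (prod_list Fs * prod_list Gs)
               (kron (fourier_matrix Fs) (prod_list Gs) (fourier_matrix Gs))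
             = defect (prod_list Fs) (fourier_matrix Fs) * defect (prod_list Gs) (fourier_matrix Gs))
       \<and> (gcd (prod_list Fs) (prod_list Gs) > 1 \<longrightarrow>
           defect (prod_list Fs * prod_list Gs)
               (kron (fourier_matrix Fs) (prod_list Gs) (fourier_matrix Gs))
             > defect (prod_list Fs) (fourier_matrix Fs) * defect (prod_list Gs) (fourier_matrix Gs))"
proof -
  have GF: "good (prod_list Fs) (fourier_matrix Fs)" using good_fm assms(3) .
  have GG: "good (prod_list Gs) (fourier_matrix Gs)" using good_fm assms(4) .
  note GK = good_kron[OF GF GG]
  note dF = defect_eq_num_ones[OF GF] and dG = defect_eq_num_ones[OF GG] and dK = defect_eq_num_ones[OF GK]
  show ?thesis
  proof (intro conjI impI)
    assume g: "gcd (prod_list Fs) (prod_list Gs) = 1"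
    show eq: "num_ones (prod_list Fs * prod_list Gs) (kron (fourier_matrix Fs) (prod_list Gs) (fourier_matrix Gs))
      = num_ones (prod_list Fs) (fourier_matrix Fs) * num_ones (prod_list Gs) (fourier_matrix Gs)"
      by (rule count_coprime[OF GF GG g])
    show "defect (prod_list Fs * prod_list Gs) (kron (fourier_matrix Fs) (prod_list Gs) (fourier_matrix Gs))
      = defect (prod_list Fs) (fourier_matrix Fs) * defect (prod_list Gs) (fourier_matrix Gs)"
      unfolding dF dG dK by (rule eq)
  next
    assume g: "gcd (prod_list Fs) (prod_list Gs) > 1"
    obtain p where p: "prime p" "p dvd gcd (prod_list Fs) (prod_list Gs)"
      using prime_factor_nat[of "gcd (prod_list Fs) (prod_list Gs)"] g by auto
    have pF: "p dvd prod_list Fs" and pG: "p dvd prod_list Gs" using p(2) dvd_trans by auto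
    have p2: "2 \<le> p" using p(1) prime_ge_2_nat by blast
    obtain i1 j1 where ij1: "i1 < prod_list Fs" "j1 < prod_list Fs" "fourier_matrix Fs i1 j1 = fourier p 1 1"
      using fm_root[OF assms(3) p(1) pF, of 1] by blast
    obtain i2 j2 where ij2: "i2 < prod_list Gs" "j2 < prod_list Gs" "fourier_matrix Gs i2 j2 = fourier p (p - 1) 1"
      using fm_root[OF assms(4) p(1) pG, of "p - 1"] by blast
    have ne: "fourier_matrix Fs i1 j1 \<noteq> 1" using ij1(3) fourier_p11[OF p2] by simp
    have "fourier p 1 1 * fourier p (p - 1) 1 = fourier p (p * 1) 1"
      using p2 by (simp add: fourier_add[symmetric])
    also have "\<dots> = 1" using p2 by (intro fourier_mult_n) simp
    finally have pr: "fourier_matrix Fs i1 j1 * fourier_matrix Gs i2 j2 = 1" using ij1 ij2 by simp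
    show "defect (prod_list Fs * prod_list Gs) (kron (fourier_matrix Fs) (prod_list Gs) (fourier_matrix Gs))
      > defect (prod_list Fs) (fourier_matrix Fs) * defect (prod_list Gs) (fourier_matrix Gs)"
      unfolding dF dG dK by (rule count_strict[OF GF GG ij1(1,2) ij2(1,2) ne pr])
  qed
qed

end
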